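(* Work with vorticities on $\mathbb{R}^2$ of the form $\omega(r,\theta)=h(\theta)$ in polar coordinates, where $h$ is $\frac{\pi}{2}$-periodic (4-fold rotationally symmetric), so that $h$ may be identified with a function on $[-\frac{\pi}{4},\frac{\pi}{4})$ with endpoints identified. For such $\omega$ the velocity is $u = 2rH(\theta)\,e_\theta$, where $$H(\theta)=\frac{\pi}{8}\int_{-\pi/4}^{\pi/4}\left|\sin(2(\theta-\theta'))\right| h(\theta')\,d\theta',$$ (equivalently $4H+H''=h$), and the 2D Euler evolution of such data is $\omega(t,r,\theta)=h(t,\theta)$ with $h(t,\cdot)$ transported by the angular velocity $2H(t,\cdot)$. A solution $\omega(t)$ is called rotating if there is a nonzero constant $c$ with $\omega(t,r,\theta)=\omega_0(r,\theta-ct)$ for all $t$. Let $\mathcal{I}$ be a disjoint union of intervals contained in $[-\frac{\pi}{8},\frac{\pi}{8}]$, and assume that $\omega_0={\bf 1}_{\mathcal{I}}(\theta)$ (extended $\frac{\pi}{2}$-periodically in $\theta$) defines a rotating solution. Then $\omega_0={\bf 1}_{[b,a]}$ for some $-\frac{\pi}{8}\le b\le a\le\frac{\pi}{8}$.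
   Context: Polar coordinates $(r,\theta)$ on $\mathbb{R}^2$; $e_\theta$ is the unit angular vector. The 2D incompressible Euler equation is $\partial_t\omega+u\cdot\nabla\omega=0$, $u=\nabla^\perp\Delta^{-1}\omega$. *)

theory Defs
  imports "HOL-Analysis.Analysis"
begin

definition Hfun :: "(real \<Rightarrow> real) \<Rightarrow> real \<Rightarrow> real" where
  "Hfun h \<theta> = pi / 8 * integral {-pi/4..pi/4} (\<lambda>\<theta>'. \<bar>sin (2 * (\<theta> - \<theta>'))\<bar> * h \<theta>')"

definition per_ind :: "real set \<Rightarrow> real \<Rightarrow> real" where
  "per_ind I \<theta> = (if \<exists>k::int. \<theta> - of_int k * (pi/2) \<in> I then 1 else 0)"

definition test_fun :: "(real \<times> real \<Rightarrow> real) \<Rightarrow> (real \<times> real \<Rightarrow> real \<times> real \<Rightarrow> real) \<Rightarrow> bool" where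
  "test_fun \<phi> D\<phi> \<longleftrightarrow>
     (\<forall>p. (\<phi> has_derivative D\<phi> p) (at p)) \<and>
     continuous_on UNIV (\<lambda>p. D\<phi> p (1, 0)) \<and>
     continuous_on UNIV (\<lambda>p. D\<phi> p (0, 1)) \<and>
     (\<forall>t \<theta>. \<phi> (t, \<theta> + pi/2) = \<phi> (t, \<theta>)) \<and>
     (\<exists>T. \<forall>t \<theta>. T \<le> \<bar>t\<bar> \<longrightarrow> \<phi> (t, \<theta>) = 0)"

text \<open>Weak formulation of  d_t h + 2 H(t) d_theta h = 0  (2D Euler for r-independent
  vorticity), i.e. for all test functions
  int int h (d_t phi + 2 H d_theta phi + 2 H' phi) dtheta dt = 0.\<close>
definition euler_weak_sol :: "(real \<Rightarrow> real \<Rightarrow> real) \<Rightarrow> bool" where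
  "euler_weak_sol h \<longleftrightarrow>
     (\<forall>\<phi> D\<phi>. test_fun \<phi> D\<phi> \<longrightarrow>
        integral UNIV (\<lambda>t. integral {-pi/4..pi/4} (\<lambda>\<theta>.
          h t \<theta> * (D\<phi> (t, \<theta>) (1, 0) + 2 * Hfun (h t) \<theta> * D\<phi> (t, \<theta>) (0, 1)
                    + 2 * deriv (Hfun (h t)) \<theta> * \<phi> (t, \<theta>)))) = 0)"

definition rotating :: "(real \<Rightarrow> real) \<Rightarrow> bool" where
  "rotating h0 \<longleftrightarrow> (\<exists>c. c \<noteq> 0 \<and> euler_weak_sol (\<lambda>t \<theta>. h0 (\<theta> - c * t)))"

end

theory Submission
  imports Defs
begin



lemma deriv_xabs: "((\<lambda>y::real. y * \<bar>y\<bar>) has_real_derivative 2 * \<bar>x\<bar>) (at x)"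
proof (cases "x = 0")
  case True
  have "((\<lambda>y::real. (y * \<bar>y\<bar> - 0 * \<bar>0\<bar>) / (y - 0)) \<longlongrightarrow> 2 * \<bar>0\<bar>) (at 0)"
  proof -
    have "((\<lambda>y::real. \<bar>y\<bar>) \<longlongrightarrow> \<bar>0\<bar>) (at 0)"
      by (intro tendsto_intros)
    then have "((\<lambda>y::real. \<bar>y\<bar>) \<longlongrightarrow> 2 * \<bar>0\<bar>) (at 0)" by simp
    then show ?thesis
      by (rule Lim_transform_eventually) (auto simp: eventually_at_filter)
  qed
  then show ?thesis using True by (simp add: has_field_derivative_iff)
next
  case False
  show ?thesis
  proof (cases "x > 0")
    case True
    have "((\<lambda>y::real. y * y) has_real_derivative 2 * \<bar>x\<bar>) (at x)"
      using True by (auto intro!: derivative_eq_intros)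
    then show ?thesis
      by (rule has_field_derivative_transform_within_open[where S="{0<..}"]) (use True in auto)
  next
    case False
    with \<open>x \<noteq> 0\<close> have n: "x < 0" by simp
    have "((\<lambda>y::real. - (y * y)) has_real_derivative 2 * \<bar>x\<bar>) (at x)"
      using n by (auto intro!: derivative_eq_intros)
    then show ?thesis
      by (rule has_field_derivative_transform_within_open[where S="{..<0}"]) (use n in auto)
  qed
qed

definition Sf :: "real \<Rightarrow> real" where "Sf x = sin x * \<bar>sin x\<bar>"

lemma deriv_Sf:
  assumes "\<bar>x\<bar> < pi/2"
  shows "(Sf has_real_derivative \<bar>sin (2 * (x::real))\<bar>) (at x)"
proof -
  have d: "((\<lambda>x. (\<lambda>y. y * \<bar>y\<bar>) (sin x)) has_real_derivative 2 * \<bar>sin x\<bar> * cos x) (at x)"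
    by (rule DERIV_chain2[OF deriv_xabs]) (auto intro!: derivative_eq_intros)
  have "cos x > 0" using assms by (intro cos_gt_zero_pi) auto
  then have "2 * \<bar>sin x\<bar> * cos x = \<bar>sin (2*x)\<bar>"
    by (simp add: sin_double abs_mult)
  with d show ?thesis unfolding Sf_def by simp
qed

lemma Sf_nonneg_eq: "0 \<le> x \<Longrightarrow> x \<le> pi/2 \<Longrightarrow> Sf x = (1 - cos (2*x)) / 2"
  unfolding Sf_def using sin_ge_zero[of x] by (simp add: cos_double power2_eq_square; smt (verit) sin_cos_squared_add3[of x])

lemma Sf_nonpos_eq: "x \<le> 0 \<Longrightarrow> -(pi/2) \<le> x \<Longrightarrow> Sf x = (cos (2*x) - 1) / 2"
  unfolding Sf_def using sin_ge_zero[of "-x"] by (simp add: cos_double power2_eq_square; smt (verit) sin_cos_squared_add3[of x])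

definition qf :: "real \<Rightarrow> real" where "qf y = (y * y + y * \<bar>y\<bar>) / 2"

lemma deriv_qf: "(qf has_real_derivative (y + \<bar>y\<bar>)) (at y)"
  unfolding qf_def
  by (rule derivative_eq_intros deriv_xabs refl | simp)+

lemma qf_pos: "y > 0 \<Longrightarrow> qf y > 0" unfolding qf_def by simp
lemma qf_nonpos: "y \<le> 0 \<Longrightarrow> qf y = 0" unfolding qf_def by (simp add: abs_if)

lemma periodic_int:
  fixes f :: "real \<Rightarrow> real"
  assumes "\<And>x. f (x + p) = f x"
  shows "f (x + of_int k * p) = f x"
proof -
  have n: "f (y + of_nat n * p) = f y" for y n
    by (induction n) (auto simp: algebra_simps assms[of "y + of_nat _ * p", simplified add.assoc] | metis add.commute add.left_commute assms)+
  show ?thesis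
  proof (cases "k \<ge> 0")
    case True
    then obtain n where "k = int n" by (metis nonneg_eq_int)
    then show ?thesis using n by simp
  next
    case False
    then have "-k \<ge> 0" by simp
    then obtain n where "-k = int n" by (metis nonneg_eq_int)
    then have k: "k = - int n" by simp
    have "f (x + of_int k * p) = f ((x + of_int k * p) + of_nat n * p)" using n by simp
    also have "\<dots> = f x" using k by simp
    finally show ?thesis .
  qed
qed

lemma periodic_shift_has_integral:
  fixes f :: "real \<Rightarrow> real"
  assumes per: "\<And>x. f (x + p) = f x" and p: "p > 0"
    and int: "f integrable_on {a..a+p}"
  shows "((\<lambda>x. f (x + s)) has_integral integral {a..a+p} f) {a..a+p}"
proof -
  define k where "k = floor (s / p)"
  define r where "r = s - of_int k * p"
  have r0: "0 \<le> r" and rp: "r < p"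
  proof -
    have "of_int k \<le> s / p" "s / p < of_int k + 1" unfolding k_def by linarith+
    then have "of_int k * p \<le> s" "s < (of_int k + 1) * p" using p by (auto simp: field_simps)
    then show "0 \<le> r" "r < p" unfolding r_def by (auto simp: algebra_simps)
  qed
  have fs: "f (x + s) = f (x + r)" for x
    using periodic_int[of f p "x + r" k, OF per] unfolding r_def by (simp add: algebra_simps)
  define J where "J = integral {a..a+r} f"
  define K where "K = integral {a+r..a+p} f"
  have iJ: "(f has_integral J) {a..a+r}" unfolding J_def
    by (rule integrable_integral, rule integrable_subinterval_real[OF int]) (use r0 rp in auto)
  have iK: "(f has_integral K) {a+r..a+p}" unfolding K_def
    by (rule integrable_integral, rule integrable_subinterval_real[OF int]) (use r0 rp in auto)
  have tot: "(f has_integral J + K) {a..a+p}"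
    by (rule has_integral_combine[OF _ _ iJ iK]) (use r0 rp in auto)
  then have tot': "integral {a..a+p} f = J + K" by (rule integral_unique)
  have "((\<lambda>x. f (x + p)) has_integral J) {(a+p)-p..(a+p+r)-p}" using iJ by (simp add: per)
  then have iJ': "(f has_integral J) {a+p..a+p+r}"
    using has_integral_shift_real_ivl_iff[of f J "a+p" "a+p+r" p] by simp
  have "(f has_integral K + J) {a+r..a+p+r}"
    by (rule has_integral_combine[OF _ _ iK iJ']) (use r0 rp in auto)
  then have "((\<lambda>x. f (x + r)) has_integral K + J) {(a+r)-r..(a+p+r)-r}"
    using has_integral_shift_real_ivl_iff[of f "K+J" "a+r" "a+p+r" r] by simp
  then show ?thesis using tot' fs by (simp add: add.commute)
qed




lemma per_ind_periodic: "per_ind A (x + pi/2) = per_ind A x"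
proof -
  have "(\<exists>k::int. x + pi/2 - of_int k * (pi/2) \<in> A) \<longleftrightarrow> (\<exists>k::int. x - of_int k * (pi/2) \<in> A)"
  proof
    assume "\<exists>k::int. x + pi/2 - of_int k * (pi/2) \<in> A"
    then obtain k::int where "x + pi/2 - of_int k * (pi/2) \<in> A" by blast
    moreover have "x - of_int (k - 1) * (pi/2) = x + pi/2 - of_int k * (pi/2)" by (simp add: field_simps)
    ultimately have "x - of_int (k - 1) * (pi/2) \<in> A" by (simp only:)
    then show "\<exists>k::int. x - of_int k * (pi/2) \<in> A" by blast
  next
    assume "\<exists>k::int. x - of_int k * (pi/2) \<in> A"
    then obtain k::int where "x - of_int k * (pi/2) \<in> A" by blast
    moreover have "x + pi/2 - of_int (k + 1) * (pi/2) = x - of_int k * (pi/2)" by (simp add: field_simps)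
    ultimately have "x + pi/2 - of_int (k + 1) * (pi/2) \<in> A" by (simp only:)
    then show "\<exists>k::int. x + pi/2 - of_int k * (pi/2) \<in> A" by blast
  qed
  then show ?thesis unfolding per_ind_def by simp
qed

lemma abs_sin2_periodic: "\<bar>sin (2 * (x + pi/2))\<bar> = \<bar>sin (2 * (x::real))\<bar>"
proof -
  have "sin (2 * (x + pi/2)) = - sin (2*x)" by (simp add: algebra_simps sin_add)
  then show ?thesis by simp
qed

lemma Hfun_periodic: "Hfun h (x + pi/2) = Hfun h x"
  unfolding Hfun_def
  using abs_sin2_periodic[of "_ - _"] by (simp add: algebra_simps)

lemma deriv_periodic:
  fixes f :: "real \<Rightarrow> real"
  assumes "\<And>x. f (x + p) = f x"
  shows "deriv f (x + p) = deriv f x"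
proof -
  have "(\<lambda>x. f (x + p)) = f" using assms by auto
  then have "\<And>D. (f has_field_derivative D) (at (x + p)) = (f has_field_derivative D) (at x)"
    using DERIV_shift[of f _ x p] by simp
  then show ?thesis unfolding deriv_def by simp
qed

lemma deriv_shift_fun:
  fixes f :: "real \<Rightarrow> real"
  shows "deriv (\<lambda>x. f (x + s)) x = deriv f (x + s)"
  unfolding deriv_def using DERIV_shift[of f _ x s] by simp

locale ivs =
  fixes I :: "real set" and F :: "real set set"
  assumes finF: "finite F" and intv: "\<forall>J\<in>F. is_interval J" and disj: "pairwise disjnt F"
    and IF: "I = \<Union>F" and Isub: "I \<subseteq> {-pi/8..pi/8}"
begin

lemma per_ind_eq:
  assumes "x \<in> {-pi/4..pi/4}"
  shows "per_ind I x = (if x \<in> I then 1 else 0)"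
proof -
  have "k = 0" if k: "x - of_int k * (pi/2) \<in> I" for k :: int
  proof -
    have "-pi/8 \<le> x - of_int k * (pi/2)" "x - of_int k * (pi/2) \<le> pi/8" using k Isub by auto
    moreover have "-pi/4 \<le> x" "x \<le> pi/4" using assms by auto
    ultimately have "of_int k * (pi/2) \<le> (3/4) * (pi/2)" "(-3/4) * (pi/2) \<le> of_int k * (pi/2)" by linarith+
    moreover have "pi/2 > 0" by simp
    ultimately have "real_of_int k \<le> 3/4" "-3/4 \<le> real_of_int k"
      by (meson mult_le_cancel_right_pos)+
    then show "k = 0" by linarith
  qed
  then have "(\<exists>k::int. x - of_int k * (pi/2) \<in> I) \<longleftrightarrow> x \<in> I" by (metis add_0 diff_zero mult_zero_left of_int_0)
  then show ?thesis unfolding per_ind_def by simp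
qed

lemma J_sub: "J \<in> F \<Longrightarrow> J \<subseteq> {-pi/8..pi/8}" using IF Isub by auto

lemma J_facts:
  assumes J: "J \<in> F" and ne: "J \<noteq> {}"
  shows "Inf J \<le> Sup J" "J \<subseteq> {Inf J..Sup J}" "{Inf J<..<Sup J} \<subseteq> J"
    "-pi/8 \<le> Inf J" "Sup J \<le> pi/8"
proof -
  have sub: "J \<subseteq> {-pi/8..pi/8}" using J_sub[OF J] .
  have ba: "bdd_above J" "bdd_below J" using sub by (auto intro: bdd_above_mono bdd_below_mono)
  show lo: "J \<subseteq> {Inf J..Sup J}" using ba by (auto intro: cInf_lower cSup_upper)
  then show "Inf J \<le> Sup J" using ne by auto
  show "{Inf J<..<Sup J} \<subseteq> J"
  proof
    fix x assume x: "x \<in> {Inf J<..<Sup J}"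
    then obtain a where "a \<in> J" "a < x" using ne by (auto simp: cInf_less_iff ba)
    moreover obtain b where "b \<in> J" "x < b" using x ne by (auto simp: less_cSup_iff ba)
    ultimately show "x \<in> J" using intv J unfolding is_interval_1 by (meson less_imp_le)
  qed
  show "-pi/8 \<le> Inf J" using sub ne by (intro cInf_greatest) auto
  show "Sup J \<le> pi/8" using sub ne by (intro cSup_least) auto
qed

lemma J_has_integral:
  fixes f :: "real \<Rightarrow> real"
  assumes J: "J \<in> F" and ne: "J \<noteq> {}" and f: "(f has_integral y) {Inf J..Sup J}"
  shows "(f has_integral y) J"
proof -
  have "{Inf J..Sup J} - J \<subseteq> {Inf J, Sup J}"
  proof
    fix x assume x: "x \<in> {Inf J..Sup J} - J"
    show "x \<in> {Inf J, Sup J}"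
    proof (rule ccontr)
      assume "x \<notin> {Inf J, Sup J}"
      with x have "x \<in> {Inf J<..<Sup J}" by auto
      with J_facts(3)[OF J ne] x show False by auto
    qed
  qed
  then have n1: "negligible {x \<in> {Inf J..Sup J} - J. f x \<noteq> 0}"
    by (intro negligible_subset[OF negligible_finite[of "{Inf J, Sup J}"]]) blast+
  have "{x \<in> J - {Inf J..Sup J}. f x \<noteq> 0} = {}" using J_facts(2)[OF J ne] by blast
  then have n2: "negligible {x \<in> J - {Inf J..Sup J}. f x \<noteq> 0}" by (simp only: negligible_empty)
  show ?thesis using has_integral_spike_set_eq[OF n1 n2] f by simp
qed

lemma L2:
  fixes f :: "real \<Rightarrow> real"
  assumes "\<And>J. J \<in> F \<Longrightarrow> (f has_integral i J) J"
  shows "((\<lambda>x. per_ind I x * f x) has_integral sum i F) {-pi/4..pi/4}"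
proof -
  have pw: "pairwise (\<lambda>S S'. negligible (S \<inter> S')) F"
    using disj unfolding pairwise_def disjnt_def by auto
  have "(f has_integral sum i F) I" unfolding IF by (rule has_integral_Union[OF finF assms pw])
  then have "((\<lambda>x. if x \<in> I then f x else 0) has_integral sum i F) {-pi/4..pi/4}"
    using Isub by (subst has_integral_restrict) (auto simp: divide_simps)
  then show ?thesis
    by (rule has_integral_cong[THEN iffD1, rotated]) (simp add: per_ind_eq)
qed

definition H0 where "H0 = Hfun (per_ind I)"

definition Hsum :: "real \<Rightarrow> real" where
  "Hsum \<theta> = (\<Sum>J\<in>F. if J = {} then 0 else Sf (\<theta> - Inf J) - Sf (\<theta> - Sup J))"

lemma H0_formula:
  assumes th: "\<bar>\<theta>\<bar> < 3*pi/8"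
  shows "H0 \<theta> = pi/8 * Hsum \<theta>"
proof -
  have "((\<lambda>t. \<bar>sin (2 * (\<theta> - t))\<bar>) has_integral
          (if J = {} then 0 else Sf (\<theta> - Inf J) - Sf (\<theta> - Sup J))) J" if J: "J \<in> F" for J
  proof (cases "J = {}")
    case True then show ?thesis by simp
  next
    case False
    note JF = J_facts[OF J False]
    have "((\<lambda>t. - Sf (\<theta> - t)) has_vector_derivative \<bar>sin (2 * (\<theta> - t))\<bar>) (at t within {Inf J..Sup J})"
      if t: "t \<in> {Inf J..Sup J}" for t
    proof -
      have "-3*pi/8 < \<theta>" "\<theta> < 3*pi/8" "-pi/8 \<le> t" "t \<le> pi/8" using t JF th by auto
      then have a: "\<theta> - t < pi/2" and b: "-(pi/2) < \<theta> - t" by linarith+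
      then have "\<bar>\<theta> - t\<bar> < pi/2" using abs_less_iff[of "\<theta> - t" "pi/2"] by linarith
      then have "((\<lambda>t. - Sf (\<theta> - t)) has_real_derivative \<bar>sin (2 * (\<theta> - t))\<bar>) (at t)"
        by (auto intro!: derivative_eq_intros DERIV_chain2[OF deriv_Sf])
      then show ?thesis
        by (simp add: has_real_derivative_iff_has_vector_derivative has_vector_derivative_at_within)
    qed
    from fundamental_theorem_of_calculus[OF JF(1) this]
    have "((\<lambda>t. \<bar>sin (2 * (\<theta> - t))\<bar>) has_integral Sf (\<theta> - Inf J) - Sf (\<theta> - Sup J)) {Inf J..Sup J}"
      by simp
    then show ?thesis using J_has_integral[OF J False] False by simp
  qed
  from L2[OF this] have "((\<lambda>x. per_ind I x * \<bar>sin (2 * (\<theta> - x))\<bar>) has_integral Hsum \<theta>) {-pi/4..pi/4}"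
    unfolding Hsum_def by simp
  moreover have "(\<lambda>x. per_ind I x * \<bar>sin (2 * (\<theta> - x))\<bar>) = (\<lambda>x. \<bar>sin (2 * (\<theta> - x))\<bar> * per_ind I x)"
    by (rule ext) (rule mult.commute)
  ultimately have "integral {-pi/4..pi/4} (\<lambda>x. \<bar>sin (2 * (\<theta> - x))\<bar> * per_ind I x) = Hsum \<theta>"
    by (metis integral_unique)
  then show ?thesis unfolding H0_def Hfun_def by (simp only:)
qed

end



definition chi :: "real \<Rightarrow> real" where "chi t = qf (1 - t*t)"
definition chi' :: "real \<Rightarrow> real" where "chi' t = (1 - t*t + \<bar>1 - t*t\<bar>) * (-2*t)"

lemma chi_deriv: "(chi has_real_derivative chi' t) (at t)"
  unfolding chi_def chi'_def
  by (rule DERIV_chain2[OF deriv_qf]) (auto intro!: derivative_eq_intros)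

lemma chi_cont: "continuous_on UNIV chi"
  by (meson DERIV_isCont chi_deriv continuous_at_imp_continuous_on)

lemma chi'_cont: "continuous_on UNIV chi'"
  unfolding chi'_def by (intro continuous_intros)

lemma chi_zero: "1 \<le> \<bar>t\<bar> \<Longrightarrow> chi t = 0"
proof -
  assume "1 \<le> \<bar>t\<bar>"
  then have "1 * 1 \<le> \<bar>t\<bar> * \<bar>t\<bar>" by (intro mult_mono) auto
  then have "1 - t*t \<le> 0" by (simp add: abs_mult_self_eq)
  then show ?thesis unfolding chi_def by (rule qf_nonpos)
qed

lemma chi'_zero: "1 \<le> \<bar>t\<bar> \<Longrightarrow> chi' t = 0"
proof -
  assume "1 \<le> \<bar>t\<bar>"
  then have "1 * 1 \<le> \<bar>t\<bar> * \<bar>t\<bar>" by (intro mult_mono) auto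
  then have "1 - t*t \<le> 0" by (simp add: abs_mult_self_eq)
  then show ?thesis unfolding chi'_def by simp
qed

lemma comp_lin_cont:
  fixes f :: "real \<Rightarrow> real"
  assumes "continuous_on UNIV f"
  shows "continuous_on UNIV (\<lambda>p::real\<times>real. f (snd p - c * fst p))"
  by (rule continuous_on_compose2[OF assms]) (auto intro!: continuous_intros)

lemma comp_fst_cont:
  fixes f :: "real \<Rightarrow> real"
  assumes "continuous_on UNIV f"
  shows "continuous_on UNIV (\<lambda>p::real\<times>real. f (fst p))"
  by (rule continuous_on_compose2[OF assms]) (auto intro!: continuous_intros)

definition phiT where "phiT \<psi> c = (\<lambda>p. chi (fst p) * \<psi> (snd p - c * fst p))"
definition DphiT where "DphiT \<psi> \<psi>' c = (\<lambda>p v. chi' (fst p) * fst v * \<psi> (snd p - c * fst p)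
      + chi (fst p) * (\<psi>' (snd p - c * fst p) * (snd v - c * fst v)))"

lemma test_fun_ok:
  fixes \<psi> \<psi>' :: "real \<Rightarrow> real" and c :: real
  assumes d\<psi>: "\<And>x. (\<psi> has_real_derivative \<psi>' x) (at x)"
    and c\<psi>': "continuous_on UNIV \<psi>'"
    and per: "\<And>x. \<psi> (x + pi/2) = \<psi> x"
  shows "test_fun (phiT \<psi> c) (DphiT \<psi> \<psi>' c)"
proof -
  have c\<psi>: "continuous_on UNIV \<psi>"
    by (meson DERIV_isCont d\<psi> continuous_at_imp_continuous_on)
  have der: "(phiT \<psi> c has_derivative DphiT \<psi> \<psi>' c p) (at p)" for p :: "real \<times> real"
  proof -
    have d1: "((\<lambda>p::real\<times>real. chi (fst p)) has_derivative (\<lambda>v. fst v * chi' (fst p))) (at p)"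
      by (rule DERIV_compose_FDERIV[OF chi_deriv has_derivative_fst[OF has_derivative_ident]])
    have lin: "((\<lambda>p::real\<times>real. snd p - c * fst p) has_derivative (\<lambda>v. snd v - c * fst v)) (at p)"
      by (rule bounded_linear_imp_has_derivative) (intro bounded_linear_intros)
    have d2: "((\<lambda>p::real\<times>real. \<psi> (snd p - c * fst p)) has_derivative
        (\<lambda>v. (snd v - c * fst v) * \<psi>' (snd p - c * fst p))) (at p)"
      by (rule DERIV_compose_FDERIV[OF d\<psi> lin])
    show ?thesis unfolding phiT_def
      by (rule has_derivative_eq_rhs[OF has_derivative_mult[OF d1 d2]])
         (auto simp: DphiT_def algebra_simps)
  qed
  have c1: "continuous_on UNIV (\<lambda>p. DphiT \<psi> \<psi>' c p (1, 0))"
    unfolding DphiT_def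
    by (auto intro!: continuous_intros comp_lin_cont comp_fst_cont chi_cont chi'_cont c\<psi> c\<psi>')
  have c2: "continuous_on UNIV (\<lambda>p. DphiT \<psi> \<psi>' c p (0, 1))"
    unfolding DphiT_def
    by (auto intro!: continuous_intros comp_lin_cont comp_fst_cont chi_cont chi'_cont c\<psi> c\<psi>')
  have pe: "phiT \<psi> c (t, \<theta> + pi/2) = phiT \<psi> c (t, \<theta>)" for t \<theta>
    unfolding phiT_def using per[of "\<theta> - c * t"] by (simp add: algebra_simps)
  have sp: "\<forall>t \<theta>. 1 \<le> \<bar>t\<bar> \<longrightarrow> phiT \<psi> c (t, \<theta>) = 0"
    unfolding phiT_def by (simp add: chi_zero)
  show ?thesis unfolding test_fun_def using der c1 c2 pe sp by blast
qed




lemma pshift: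
  fixes f :: "real \<Rightarrow> real"
  assumes per: "\<And>x. f (x + pi/2) = f x" and i: "(f has_integral y) {-pi/4..pi/4}"
  shows "((\<lambda>x. f (x - s)) has_integral y) {-pi/4..pi/4}"
proof -
  have e: "-pi/4 + pi/2 = pi/4" by simp
  have "f integrable_on {-pi/4..-pi/4 + pi/2}" using i e by auto
  from periodic_shift_has_integral[OF per _ this, of "-s"]
  have "((\<lambda>x. f (x + - s)) has_integral integral {-pi/4..-pi/4 + pi/2} f) {-pi/4..-pi/4 + pi/2}"
    by simp
  then show ?thesis using e i integral_unique[OF i] by simp
qed

lemma chi_integral:
  "((\<lambda>t. chi' t * K1 + chi t * K2) has_integral (16/15) * K2) UNIV"
proof -
  define A where "A t = chi t * K1 + (t - 2*t^3/3 + t^5/5) * K2" for t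
  have chi_in: "chi t = (1 - t*t) * (1 - t*t)" if "t \<in> {-1..1}" for t
  proof -
    have "\<bar>t\<bar> \<le> 1" using that by auto
    then have "t * t \<le> 1" using abs_mult_self_eq[of t] mult_mono[of "\<bar>t\<bar>" 1 "\<bar>t\<bar>" 1] by auto
    then show ?thesis unfolding chi_def qf_def by (simp add: abs_of_nonneg)
  qed
  have "(A has_vector_derivative chi' t * K1 + chi t * K2) (at t within {-1..1})" if t: "t \<in> {-1..1}" for t
  proof -
    have "(A has_real_derivative chi' t * K1 + (1 - 2*t^2 + t^4) * K2) (at t)"
      unfolding A_def by (rule derivative_eq_intros chi_deriv refl | simp add: field_simps)+
    moreover have "(1 - 2*t^2 + t^4) = chi t" using chi_in[OF t] by (simp add: algebra_simps power2_eq_square power4_eq_xxxx)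
    ultimately show ?thesis
      by (simp add: has_real_derivative_iff_has_vector_derivative has_vector_derivative_at_within)
  qed
  from fundamental_theorem_of_calculus[OF _ this]
  have "((\<lambda>t. chi' t * K1 + chi t * K2) has_integral A 1 - A (-1)) {-1..1}" by simp
  moreover have "A 1 - A (-1) = (16/15) * K2" unfolding A_def using chi_zero[of 1] chi_zero[of "-1"] by simp
  ultimately have "((\<lambda>t. chi' t * K1 + chi t * K2) has_integral (16/15) * K2) {-1..1}" by simp
  then show ?thesis
    by (rule has_integral_on_superset) (auto simp: chi_zero chi'_zero)
qed

context ivs begin

definition dH0 where "dH0 = deriv H0"

lemma H0_periodic: "H0 (x + pi/2) = H0 x" unfolding H0_def by (rule Hfun_periodic)
lemma dH0_periodic: "dH0 (x + pi/2) = dH0 x" unfolding dH0_def by (rule deriv_periodic) (rule H0_periodic)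

lemma H0_deriv:
  assumes th: "\<bar>\<theta>\<bar> < 3*pi/8"
  shows "(H0 has_real_derivative dH0 \<theta>) (at \<theta>)"
proof -
  have dJ: "((\<lambda>\<theta>. if J = {} then 0 else Sf (\<theta> - Inf J) - Sf (\<theta> - Sup J)) has_real_derivative
     (if J = {} then 0 else \<bar>sin (2 * (\<theta> - Inf J))\<bar> - \<bar>sin (2 * (\<theta> - Sup J))\<bar>)) (at \<theta>)"
    if J: "J \<in> F" for J
  proof (cases "J = {}")
    case True then show ?thesis by simp
  next
    case False
    note JF = J_facts[OF J False]
    have "-3*pi/8 < \<theta>" "\<theta> < 3*pi/8" "-pi/8 \<le> Inf J" "Sup J \<le> pi/8" "Inf J \<le> Sup J" using th JF by auto
    then have "\<theta> - Inf J < pi/2" "-(pi/2) < \<theta> - Inf J" "\<theta> - Sup J < pi/2" "-(pi/2) < \<theta> - Sup J" by linarith+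
    then have a: "\<bar>\<theta> - Inf J\<bar> < pi/2" "\<bar>\<theta> - Sup J\<bar> < pi/2"
      using abs_less_iff[of "\<theta> - Inf J" "pi/2"] abs_less_iff[of "\<theta> - Sup J" "pi/2"] by linarith+
    have "((\<lambda>\<theta>. Sf (\<theta> - Inf J) - Sf (\<theta> - Sup J)) has_real_derivative
       \<bar>sin (2 * (\<theta> - Inf J))\<bar> - \<bar>sin (2 * (\<theta> - Sup J))\<bar>) (at \<theta>)"
    proof -
      have e1: "((\<lambda>\<theta>. Sf (\<theta> - Inf J)) has_real_derivative \<bar>sin (2 * (\<theta> - Inf J))\<bar> * 1) (at \<theta>)"
        by (rule DERIV_chain2[where f=Sf and g="\<lambda>\<theta>. \<theta> - Inf J", OF deriv_Sf[OF a(1)]]) (auto intro!: derivative_eq_intros)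
      have e2: "((\<lambda>\<theta>. Sf (\<theta> - Sup J)) has_real_derivative \<bar>sin (2 * (\<theta> - Sup J))\<bar> * 1) (at \<theta>)"
        by (rule DERIV_chain2[where f=Sf and g="\<lambda>\<theta>. \<theta> - Sup J", OF deriv_Sf[OF a(2)]]) (auto intro!: derivative_eq_intros)
      show ?thesis using DERIV_diff[OF e1 e2] by simp
    qed
    then show ?thesis using False by simp
  qed
  have "((\<lambda>\<theta>. pi/8 * Hsum \<theta>) has_real_derivative pi/8 *
     (\<Sum>J\<in>F. if J = {} then 0 else \<bar>sin (2 * (\<theta> - Inf J))\<bar> - \<bar>sin (2 * (\<theta> - Sup J))\<bar>)) (at \<theta>)"
    unfolding Hsum_def by (intro DERIV_cmult DERIV_sum dJ)
  then have d: "(H0 has_real_derivative pi/8 *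
     (\<Sum>J\<in>F. if J = {} then 0 else \<bar>sin (2 * (\<theta> - Inf J))\<bar> - \<bar>sin (2 * (\<theta> - Sup J))\<bar>)) (at \<theta>)"
  proof (rule has_field_derivative_transform_within_open[where S="{-3*pi/8<..<3*pi/8}"])
    show "open {-3*pi/8<..<3*pi/8::real}" by simp
    show "\<theta> \<in> {-3*pi/8<..<3*pi/8}" using th by (cases "\<theta> \<ge> 0") auto
    fix x assume "x \<in> {-3*pi/8<..<3*pi/8::real}"
    then have "\<bar>x\<bar> < 3*pi/8" by (cases "x \<ge> 0") auto
    then show "pi/8 * Hsum x = H0 x" by (simp only: H0_formula)
  qed
  have "deriv H0 \<theta> = pi/8 *
     (\<Sum>J\<in>F. if J = {} then 0 else \<bar>sin (2 * (\<theta> - Inf J))\<bar> - \<bar>sin (2 * (\<theta> - Sup J))\<bar>)"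
    by (rule DERIV_imp_deriv[OF d])
  then show ?thesis unfolding dH0_def using d by (simp only:)
qed

lemma L2_cont:
  fixes g :: "real \<Rightarrow> real"
  assumes "continuous_on {-pi/4..pi/4} g"
  shows "((\<lambda>x. per_ind I x * g x) has_integral (\<Sum>J\<in>F. integral J g)) {-pi/4..pi/4}"
proof (rule L2)
  fix J assume J: "J \<in> F"
  show "(g has_integral integral J g) J"
  proof (cases "J = {}")
    case True then show ?thesis by simp
  next
    case False
    note JF = J_facts[OF J False]
    have "{Inf J..Sup J} \<subseteq> {-pi/4..pi/4}" using JF by auto
    then have "g integrable_on {Inf J..Sup J}"
      by (intro integrable_continuous_interval continuous_on_subset[OF assms])
    then have "g integrable_on J" using J_has_integral[OF J False] has_integral_integral by blast
    then show ?thesis by (metis has_integral_integral)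
  qed
qed

lemma Hfun_shift: "Hfun (\<lambda>x. per_ind I (x - s)) \<theta> = H0 (\<theta> - s)"
proof -
  define f where "f x = per_ind I x * \<bar>sin (2 * (\<theta> - s - x))\<bar>" for x
  have "(f has_integral (\<Sum>J\<in>F. integral J (\<lambda>x. \<bar>sin (2 * (\<theta> - s - x))\<bar>))) {-pi/4..pi/4}"
    unfolding f_def by (intro L2_cont continuous_intros)
  then have fi: "(f has_integral integral {-pi/4..pi/4} f) {-pi/4..pi/4}"
    using integral_unique by metis
  have per: "f (x + pi/2) = f x" for x
    unfolding f_def per_ind_periodic using abs_sin2_periodic[of "\<theta> - s - x - pi/2"] by (simp add: algebra_simps)
  from pshift[OF per fi, of s]
  have "integral {-pi/4..pi/4} (\<lambda>x. f (x - s)) = integral {-pi/4..pi/4} f" by (rule integral_unique)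
  moreover have "(\<lambda>x. f (x - s)) = (\<lambda>x. \<bar>sin (2 * (\<theta> - x))\<bar> * per_ind I (x - s))"
    unfolding f_def by (auto simp: algebra_simps)
  moreover have "f = (\<lambda>x. \<bar>sin (2 * (\<theta> - s - x))\<bar> * per_ind I x)"
    unfolding f_def by (auto simp: algebra_simps)
  ultimately show ?thesis unfolding H0_def Hfun_def by simp
qed

end



context ivs begin

lemma K2_zero:
  fixes \<psi> \<psi>' :: "real \<Rightarrow> real" and c :: real
  assumes ws: "euler_weak_sol (\<lambda>t \<theta>. per_ind I (\<theta> - c * t))"
    and d\<psi>: "\<And>x. (\<psi> has_real_derivative \<psi>' x) (at x)"
    and c\<psi>': "continuous_on UNIV \<psi>'"
    and per: "\<And>x. \<psi> (x + pi/2) = \<psi> x"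
  shows "(\<Sum>J\<in>F. if J = {} then 0 else (2 * H0 (Sup J) - c) * \<psi> (Sup J) - (2 * H0 (Inf J) - c) * \<psi> (Inf J)) = 0"
proof -
  define h0 where "h0 = per_ind I"
  have per': "\<psi>' (x + pi/2) = \<psi>' x" for x
  proof -
    have "((\<lambda>y. \<psi> (y + pi/2)) has_real_derivative \<psi>' (x + pi/2)) (at x)"
      using d\<psi>[of "x + pi/2"] DERIV_shift by blast
    then have "(\<psi> has_real_derivative \<psi>' (x + pi/2)) (at x)" using per by simp
    then show ?thesis using d\<psi>[of x] DERIV_unique by blast
  qed
  define B where "B x = (2 * H0 x - c) * \<psi>' x + 2 * dH0 x * \<psi> x" for x
  define G where "G x = (2 * H0 x - c) * \<psi> x" for x
  define K1 where "K1 = (\<Sum>J\<in>F. integral J \<psi>)"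
  define K2 where "K2 = (\<Sum>J\<in>F. if J = {} then 0 else G (Sup J) - G (Inf J))"
  have c\<psi>: "continuous_on UNIV \<psi>"
    by (meson DERIV_isCont d\<psi> continuous_at_imp_continuous_on)
  have iA: "((\<lambda>x. h0 x * \<psi> x) has_integral K1) {-pi/4..pi/4}"
    unfolding h0_def K1_def by (rule L2_cont) (rule continuous_on_subset[OF c\<psi>], simp)
  have iB: "((\<lambda>x. h0 x * B x) has_integral K2) {-pi/4..pi/4}"
    unfolding h0_def K2_def
  proof (rule L2)
    fix J assume J: "J \<in> F"
    show "(B has_integral (if J = {} then 0 else G (Sup J) - G (Inf J))) J"
    proof (cases "J = {}")
      case True then show ?thesis by simp
    next
      case False
      note JF = J_facts[OF J False]
      have "(G has_vector_derivative B x) (at x within {Inf J..Sup J})" if x: "x \<in> {Inf J..Sup J}" for x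
      proof -
        have "-pi/8 \<le> x" "x \<le> pi/8" using x JF by auto
        then have "x < 3*pi/8" "-(3*pi/8) < x" using pi_gt_zero by linarith+
        then have "\<bar>x\<bar> < 3*pi/8" using abs_less_iff[of x "3*pi/8"] by linarith
        then have hd: "(H0 has_real_derivative dH0 x) (at x)" by (rule H0_deriv)
        have d: "((\<lambda>x. (2 * H0 x - c) * \<psi> x) has_real_derivative
                 (2 * dH0 x - 0) * \<psi> x + \<psi>' x * (2 * H0 x - c)) (at x)"
          by (rule DERIV_mult[OF DERIV_diff[OF DERIV_cmult[OF hd] DERIV_const] d\<psi>])
        have eq: "B x = (2 * dH0 x - 0) * \<psi> x + \<psi>' x * (2 * H0 x - c)"
          unfolding B_def by (simp add: algebra_simps)
        have "(G has_real_derivative B x) (at x)" unfolding G_def eq by (rule d)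
        then show ?thesis
          by (simp add: has_real_derivative_iff_has_vector_derivative has_vector_derivative_at_within)
      qed
      from fundamental_theorem_of_calculus[OF JF(1) this]
      have "(B has_integral G (Sup J) - G (Inf J)) {Inf J..Sup J}" .
      then show ?thesis using J_has_integral[OF J False] False by simp
    qed
  qed
  have inner: "integral {-pi/4..pi/4} (\<lambda>\<theta>. per_ind I (\<theta> - c * t) *
      (DphiT \<psi> \<psi>' c (t, \<theta>) (1, 0) + 2 * Hfun (\<lambda>\<theta>. per_ind I (\<theta> - c * t)) \<theta> * DphiT \<psi> \<psi>' c (t, \<theta>) (0, 1)
       + 2 * deriv (Hfun (\<lambda>\<theta>. per_ind I (\<theta> - c * t))) \<theta> * phiT \<psi> c (t, \<theta>)))
      = chi' t * K1 + chi t * K2" for t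
  proof -
    define \<Phi> where "\<Phi> x = h0 x * (chi' t * \<psi> x + chi t * B x)" for x
    have hf: "Hfun (\<lambda>\<theta>. per_ind I (\<theta> - c * t)) = (\<lambda>\<theta>. H0 (\<theta> - c * t))"
      by (rule ext) (rule Hfun_shift)
    have dh: "deriv (\<lambda>\<theta>. H0 (\<theta> - c * t)) \<theta> = dH0 (\<theta> - c * t)" for \<theta>
      using deriv_shift_fun[of H0 "-(c*t)" \<theta>] unfolding dH0_def by simp
    have "((\<lambda>x. chi' t * (h0 x * \<psi> x) + chi t * (h0 x * B x)) has_integral chi' t * K1 + chi t * K2) {-pi/4..pi/4}"
      by (intro has_integral_add has_integral_mult_right iA iB)
    moreover have "(\<lambda>x. chi' t * (h0 x * \<psi> x) + chi t * (h0 x * B x)) = \<Phi>"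
      unfolding \<Phi>_def by (auto simp: algebra_simps)
    ultimately have i\<Phi>: "(\<Phi> has_integral chi' t * K1 + chi t * K2) {-pi/4..pi/4}" by simp
    have per\<Phi>: "\<Phi> (x + pi/2) = \<Phi> x" for x
      unfolding \<Phi>_def B_def h0_def using per_ind_periodic per per' H0_periodic dH0_periodic by simp
    have "((\<lambda>x. \<Phi> (x - c * t)) has_integral chi' t * K1 + chi t * K2) {-pi/4..pi/4}"
      by (rule pshift[OF per\<Phi> i\<Phi>])
    moreover have "(\<lambda>\<theta>. per_ind I (\<theta> - c * t) *
      (DphiT \<psi> \<psi>' c (t, \<theta>) (1, 0) + 2 * Hfun (\<lambda>\<theta>. per_ind I (\<theta> - c * t)) \<theta> * DphiT \<psi> \<psi>' c (t, \<theta>) (0, 1)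
       + 2 * deriv (Hfun (\<lambda>\<theta>. per_ind I (\<theta> - c * t))) \<theta> * phiT \<psi> c (t, \<theta>))) = (\<lambda>x. \<Phi> (x - c * t))"
      unfolding hf dh by (rule ext) (simp add: \<Phi>_def B_def h0_def DphiT_def phiT_def algebra_simps)
    ultimately show ?thesis by (metis integral_unique)
  qed
  have tf: "test_fun (phiT \<psi> c) (DphiT \<psi> \<psi>' c)" by (rule test_fun_ok[OF d\<psi> c\<psi>' per])
  from ws tf have "integral UNIV (\<lambda>t. integral {-pi/4..pi/4} (\<lambda>\<theta>. per_ind I (\<theta> - c * t) *
      (DphiT \<psi> \<psi>' c (t, \<theta>) (1, 0) + 2 * Hfun (\<lambda>\<theta>. per_ind I (\<theta> - c * t)) \<theta> * DphiT \<psi> \<psi>' c (t, \<theta>) (0, 1)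
       + 2 * deriv (Hfun (\<lambda>\<theta>. per_ind I (\<theta> - c * t))) \<theta> * phiT \<psi> c (t, \<theta>)))) = 0"
    unfolding euler_weak_sol_def by blast
  then have "integral UNIV (\<lambda>t. chi' t * K1 + chi t * K2) = 0" unfolding inner .
  moreover have "integral UNIV (\<lambda>t. chi' t * K1 + chi t * K2) = (16/15) * K2"
    by (rule integral_unique[OF chi_integral])
  ultimately have "K2 = 0" by simp
  then show ?thesis unfolding K2_def G_def .
qed

end



lemma sum_group_card:
  fixes \<phi> :: "real \<Rightarrow> real"
  assumes "finite A" "finite E" "g ` A \<subseteq> E"
  shows "(\<Sum>J\<in>A. \<phi> (g J)) = (\<Sum>e\<in>E. real (card {J\<in>A. g J = e}) * \<phi> e)"
proof -
  have "(\<Sum>J\<in>A. \<phi> (g J)) = (\<Sum>e\<in>E. \<Sum>J\<in>{J. J \<in> A \<and> g J = e}. \<phi> (g J))"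
    using sum.group[OF assms, of "\<lambda>J. \<phi> (g J)"] by simp
  also have "\<dots> = (\<Sum>e\<in>E. real (card {J\<in>A. g J = e}) * \<phi> e)"
    by (rule sum.cong) auto
  finally show ?thesis .
qed

lemma bump_exists:
  fixes E :: "real set"
  assumes fin: "finite E" and sub: "E \<subseteq> {-pi/8..pi/8}" and e0: "e0 \<in> E"
  shows "\<exists>\<psi> \<psi>'. (\<forall>x. (\<psi> has_real_derivative \<psi>' x) (at x)) \<and> continuous_on UNIV \<psi>' \<and>
     (\<forall>x. \<psi> (x + pi/2) = \<psi> x) \<and> \<psi> e0 > 0 \<and> (\<forall>e\<in>E. e \<noteq> e0 \<longrightarrow> \<psi> e = 0)"
proof -
  define \<kappa> where "\<kappa> = Max (insert 0 ((\<lambda>e. cos (4 * (e - e0))) ` (E - {e0})))"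
  have fin2: "finite (insert 0 ((\<lambda>e. cos (4 * (e - e0))) ` (E - {e0})))" using fin by auto
  have le: "cos (4 * (e - e0)) \<le> \<kappa>" if "e \<in> E" "e \<noteq> e0" for e
    unfolding \<kappa>_def using that fin2 by (intro Max_ge) auto
  have lt1: "\<kappa> < 1"
  proof -
    have "y < 1" if yin: "y \<in> insert 0 ((\<lambda>e. cos (4 * (e - e0))) ` (E - {e0}))" for y
    proof -
      consider "y = 0" | e where "e \<in> E" "e \<noteq> e0" "y = cos (4 * (e - e0))" using yin by blast
      then show ?thesis
      proof cases
        case 1 then show ?thesis by simp
      next
        case 2
        have "-pi/8 \<le> e" "e \<le> pi/8" "-pi/8 \<le> e0" "e0 \<le> pi/8" using sub 2 e0 by auto
        then have a: "\<bar>4 * (e - e0)\<bar> \<le> pi" by (auto simp: abs_if)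
        have b: "0 < \<bar>4 * (e - e0)\<bar>" using 2 by auto
        have "cos \<bar>4 * (e - e0)\<bar> < cos 0" by (rule cos_monotone_0_pi) (use a b in auto)
        then show ?thesis using 2 by simp
      qed
    qed
    then show ?thesis unfolding \<kappa>_def using fin2 by (subst Max_less_iff) auto
  qed
  define \<psi> where "\<psi> x = qf (cos (4 * (x - e0)) - \<kappa>)" for x
  define \<psi>' where "\<psi>' x = (cos (4 * (x - e0)) - \<kappa> + \<bar>cos (4 * (x - e0)) - \<kappa>\<bar>) * (- (sin (4 * (x - e0)) * 4))" for x
  have d: "(\<psi> has_real_derivative \<psi>' x) (at x)" for x
    unfolding \<psi>_def \<psi>'_def
    by (rule DERIV_chain2[OF deriv_qf]) (auto intro!: derivative_eq_intros)
  have c: "continuous_on UNIV \<psi>'" unfolding \<psi>'_def by (intro continuous_intros)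
  have p: "\<psi> (x + pi/2) = \<psi> x" for x
  proof -
    have "cos (4 * (x + pi/2 - e0)) = cos (4 * (x - e0) + 2 * pi)" by (simp add: algebra_simps)
    also have "\<dots> = cos (4 * (x - e0))" by simp
    finally show ?thesis unfolding \<psi>_def by simp
  qed
  have pos: "\<psi> e0 > 0" unfolding \<psi>_def using lt1 by (intro qf_pos) simp
  have z: "\<psi> e = 0" if "e \<in> E" "e \<noteq> e0" for e
    unfolding \<psi>_def using le[OF that] by (intro qf_nonpos) simp
  show ?thesis using d c p pos z by blast
qed

context ivs begin

definition Fp where "Fp = {J \<in> F. J \<noteq> {} \<and> Inf J < Sup J}"
definition EE where "EE = Inf ` Fp \<union> Sup ` Fp"
definition mu where "mu e = real (card {J\<in>Fp. Inf J = e}) - real (card {J\<in>Fp. Sup J = e})"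
definition XX where "XX = EE \<union> \<Union>{J \<in> F. \<not> (J \<noteq> {} \<and> Inf J < Sup J)}"

lemma finFp: "finite Fp" unfolding Fp_def using finF by auto
lemma finEE: "finite EE" unfolding EE_def using finFp by auto
lemma EE_sub: "EE \<subseteq> {-pi/8..pi/8}"
  unfolding EE_def Fp_def using J_facts by fastforce

lemma finXX: "finite XX"
proof -
  have "finite J" if "J \<in> F" "\<not> (J \<noteq> {} \<and> Inf J < Sup J)" for J
  proof (cases "J = {}")
    case False
    with that have "Inf J = Sup J" using J_facts(1)[OF that(1) False] by auto
    then have "J \<subseteq> {Inf J}" using J_facts(2)[OF that(1) False] by auto
    then show ?thesis using finite_subset by blast
  qed simp
  then show ?thesis unfolding XX_def using finEE finF by auto
qed

lemma XX_sub: "XX \<subseteq> {-pi/8..pi/8}"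
  unfolding XX_def using EE_sub IF Isub by auto

lemma sum_F_Fp:
  "(\<Sum>J\<in>F. if J = {} then 0 else \<Phi> (Sup J) - \<Phi> (Inf J)) = (\<Sum>J\<in>Fp. \<Phi> (Sup J) - (\<Phi> (Inf J)::real))"
proof -
  have z: "\<forall>J\<in>F - Fp. (if J = {} then 0 else \<Phi> (Sup J) - \<Phi> (Inf J)) = 0"
  proof
    fix J assume J: "J \<in> F - Fp"
    show "(if J = {} then 0 else \<Phi> (Sup J) - \<Phi> (Inf J)) = 0"
    proof (cases "J = {}")
      case False
      with J have "Inf J = Sup J" using J_facts(1)[of J] unfolding Fp_def by force
      then show ?thesis by simp
    qed simp
  qed
  have sub: "Fp \<subseteq> F" unfolding Fp_def by auto
  have "(\<Sum>J\<in>F. if J = {} then 0 else \<Phi> (Sup J) - \<Phi> (Inf J)) = (\<Sum>J\<in>Fp. if J = {} then 0 else \<Phi> (Sup J) - \<Phi> (Inf J))"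
    using sum.mono_neutral_right[OF finF sub z] .
  also have "\<dots> = (\<Sum>J\<in>Fp. \<Phi> (Sup J) - \<Phi> (Inf J))"
    by (rule sum.cong) (auto simp: Fp_def)
  finally show ?thesis .
qed

lemma endpoint_sum:
  "(\<Sum>J\<in>Fp. \<Phi> (Sup J) - \<Phi> (Inf J)) = - (\<Sum>e\<in>EE. mu e * (\<Phi> e::real))"
proof -
  have "(\<Sum>J\<in>Fp. \<Phi> (Sup J) - \<Phi> (Inf J)) = (\<Sum>J\<in>Fp. \<Phi> (Sup J)) - (\<Sum>J\<in>Fp. \<Phi> (Inf J))" by (simp add: sum_subtractf)
  also have "(\<Sum>J\<in>Fp. \<Phi> (Sup J)) = (\<Sum>e\<in>EE. real (card {J\<in>Fp. Sup J = e}) * \<Phi> e)"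
    by (rule sum_group_card[OF finFp finEE]) (auto simp: EE_def)
  also have "(\<Sum>J\<in>Fp. \<Phi> (Inf J)) = (\<Sum>e\<in>EE. real (card {J\<in>Fp. Inf J = e}) * \<Phi> e)"
    by (rule sum_group_card[OF finFp finEE]) (auto simp: EE_def)
  finally show ?thesis unfolding mu_def
    by (simp add: sum_subtractf[symmetric] algebra_simps sum_negf[symmetric])
qed

lemma Hsum_EE: "Hsum \<theta> = (\<Sum>e\<in>EE. mu e * Sf (\<theta> - e))"
proof -
  have "Hsum \<theta> = (\<Sum>J\<in>F. if J = {} then 0 else (\<lambda>e. - Sf (\<theta> - e)) (Sup J) - (\<lambda>e. - Sf (\<theta> - e)) (Inf J))"
    unfolding Hsum_def by (rule sum.cong) auto
  also have "\<dots> = - (\<Sum>e\<in>EE. mu e * (- Sf (\<theta> - e)))"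
    using sum_F_Fp[of "\<lambda>e. - Sf (\<theta> - e)"] endpoint_sum[of "\<lambda>e. - Sf (\<theta> - e)"] by (simp only:)
  finally show ?thesis by (simp add: sum_negf)
qed

lemma ind_EE:
  assumes th: "\<theta> \<notin> XX"
  shows "(if \<theta> \<in> I then 1 else 0) = (\<Sum>e\<in>EE. mu e * (if e < \<theta> then 1 else 0))"
proof -
  define ind where "ind e = (if e < \<theta> then (1::real) else 0)" for e
  have "(\<Sum>e\<in>EE. mu e * ind e) = - (\<Sum>J\<in>Fp. ind (Sup J) - ind (Inf J))"
    unfolding endpoint_sum by simp
  also have "\<dots> = (\<Sum>J\<in>Fp. if Inf J < \<theta> \<and> \<theta> < Sup J then 1 else 0)"
    unfolding sum_negf[symmetric]
  proof (rule sum.cong[OF refl])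
    fix J assume J: "J \<in> Fp"
    then have "Sup J \<in> EE" "Inf J < Sup J" unfolding EE_def Fp_def by auto
    then have "\<theta> \<noteq> Sup J" using th unfolding XX_def by auto
    then show "- (ind (Sup J) - ind (Inf J)) = (if Inf J < \<theta> \<and> \<theta> < Sup J then 1 else 0)"
      unfolding ind_def using \<open>Inf J < Sup J\<close> by auto
  qed
  also have "\<dots> = (if \<theta> \<in> I then 1 else 0)"
  proof (cases "\<theta> \<in> I")
    case True
    then obtain J0 where J0: "J0 \<in> F" "\<theta> \<in> J0" using IF by auto
    have J0p: "J0 \<in> Fp" using J0 th unfolding XX_def Fp_def by auto
    have "Inf J0 \<in> EE" "Sup J0 \<in> EE" using J0p unfolding EE_def by auto
    then have "\<theta> \<noteq> Inf J0" "\<theta> \<noteq> Sup J0" using th unfolding XX_def by auto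
    moreover have "J0 \<noteq> {}" using J0 by auto
    then have "Inf J0 \<le> \<theta>" "\<theta> \<le> Sup J0" using J_facts(2)[OF J0(1)] J0 by auto
    ultimately have in0: "Inf J0 < \<theta> \<and> \<theta> < Sup J0" by auto
    have others: "\<not> (Inf J < \<theta> \<and> \<theta> < Sup J)" if "J \<in> Fp" "J \<noteq> J0" for J
    proof
      assume "Inf J < \<theta> \<and> \<theta> < Sup J"
      then have "\<theta> \<in> J" using J_facts(3)[of J] that unfolding Fp_def by auto
      moreover have "disjnt J J0" using disj that J0p unfolding pairwise_def Fp_def by auto
      ultimately show False using J0 unfolding disjnt_def by auto
    qed
    have "(\<Sum>J\<in>Fp. if Inf J < \<theta> \<and> \<theta> < Sup J then 1 else (0::real))
        = (if Inf J0 < \<theta> \<and> \<theta> < Sup J0 then 1 else 0) + (\<Sum>J\<in>Fp - {J0}. if Inf J < \<theta> \<and> \<theta> < Sup J then 1 else 0)"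
      by (rule sum.remove[OF finFp J0p])
    also have "(\<Sum>J\<in>Fp - {J0}. if Inf J < \<theta> \<and> \<theta> < Sup J then 1 else (0::real)) = 0"
      by (rule sum.neutral) (use others in auto)
    finally show ?thesis using in0 True by simp
  next
    case False
    have "\<not> (Inf J < \<theta> \<and> \<theta> < Sup J)" if "J \<in> Fp" for J
    proof
      assume "Inf J < \<theta> \<and> \<theta> < Sup J"
      then have "\<theta> \<in> J" using J_facts(3)[of J] that unfolding Fp_def by auto
      then show False using False that IF unfolding Fp_def by auto
    qed
    then show ?thesis using False by (simp add: sum.neutral)
  qed
  finally show ?thesis unfolding ind_def by simp
qed

lemma endpoint_vals:
  assumes rot: "rotating (per_ind I)"
  obtains c where "c \<noteq> 0" "\<And>e. e \<in> EE \<Longrightarrow> mu e \<noteq> 0 \<Longrightarrow> 2 * H0 e = c"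
proof -
  obtain c where c: "c \<noteq> 0" and ws: "euler_weak_sol (\<lambda>t \<theta>. per_ind I (\<theta> - c * t))"
    using rot unfolding rotating_def by blast
  have "2 * H0 e = c" if e: "e \<in> EE" "mu e \<noteq> 0" for e
  proof -
    obtain \<psi> \<psi>' where d: "\<forall>x. (\<psi> has_real_derivative \<psi>' x) (at x)" and cc: "continuous_on UNIV \<psi>'"
      and p: "\<forall>x. \<psi> (x + pi/2) = \<psi> x" and pos: "\<psi> e > 0" and z: "\<forall>e'\<in>EE. e' \<noteq> e \<longrightarrow> \<psi> e' = 0"
      using bump_exists[OF finEE EE_sub e(1)] by blast
    define G where "G x = (2 * H0 x - c) * \<psi> x" for x
    have "(\<Sum>J\<in>F. if J = {} then 0 else G (Sup J) - G (Inf J)) = 0"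
      unfolding G_def using K2_zero[OF ws] d cc p by blast
    then have "(\<Sum>e'\<in>EE. mu e' * G e') = 0" unfolding sum_F_Fp endpoint_sum by simp
    moreover have "(\<Sum>e'\<in>EE. mu e' * G e') = mu e * G e + (\<Sum>e'\<in>EE - {e}. mu e' * G e')"
      by (rule sum.remove[OF finEE e(1)])
    moreover have "(\<Sum>e'\<in>EE - {e}. mu e' * G e') = 0"
      by (rule sum.neutral) (use z in \<open>auto simp: G_def\<close>)
    ultimately have "mu e * G e = 0" by simp
    then have "2 * H0 e - c = 0" using e(2) pos unfolding G_def by simp
    then show ?thesis by simp
  qed
  then show ?thesis using c that by blast
qed

end



lemma gap_lemma:
  fixes A B x y v :: real
  assumes hx: "A * cos (2*x) + B * sin (2*x) = v" and hy: "A * cos (2*y) + B * sin (2*y) = v"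
    and l0: "0 < y - x" and lpi: "y - x < pi"
  shows "\<exists>V. V^2 = A^2 + B^2 \<and> v = V * cos (y - x)"
proof -
  define m where "m = x + y"
  define l where "l = y - x"
  have x2: "2*x = m - l" and y2: "2*y = m + l" unfolding m_def l_def by auto
  define V where "V = A * cos m + B * sin m"
  define U where "U = A * sin m - B * cos m"
  have fx: "v = V * cos l + U * sin l"
  proof -
    have "v = A * (cos m * cos l + sin m * sin l) + B * (sin m * cos l - cos m * sin l)"
      using hx unfolding x2 cos_diff sin_diff by simp
    then show ?thesis unfolding V_def U_def by algebra
  qed
  have fy: "v = V * cos l - U * sin l"
  proof -
    have "v = A * (cos m * cos l - sin m * sin l) + B * (sin m * cos l + cos m * sin l)"
      using hy unfolding y2 cos_add sin_add by simp
    then show ?thesis unfolding V_def U_def by algebra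
  qed
  have "sin l > 0" unfolding l_def using l0 lpi by (intro sin_gt_zero) auto
  then have U0: "U = 0" using fx fy by simp
  have "V^2 + U^2 = A^2 * ((sin m)^2 + (cos m)^2) + B^2 * ((sin m)^2 + (cos m)^2)"
    unfolding V_def U_def by algebra
  then have "V^2 + U^2 = A^2 + B^2" by simp
  then have "V^2 = A^2 + B^2" using U0 by simp
  moreover have "v = V * cos (y - x)" using fx U0 unfolding l_def by simp
  ultimately show ?thesis by blast
qed

lemma cos2_diff: "cos (2*((a::real) - b)) = cos (2*a) * cos (2*b) + sin (2*a) * sin (2*b)"
proof -
  have "2*(a-b) = 2*a - 2*b" by simp
  then show ?thesis by (simp only: cos_diff)
qed

lemma core_contra:
  fixes P Q e1 e2 e3 eN v :: real
  assumes o12: "e1 < e2" and o23: "e2 < e3" and o3N: "e3 \<le> eN"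
    and r1: "-pi/8 \<le> e1" and rN: "eN \<le> pi/8" and v: "v \<noteq> 0"
    and h1: "P * cos (2*e1) + Q * sin (2*e1) = v"
    and hN: "- (P * cos (2*eN) + Q * sin (2*eN)) = v"
    and h2: "P * cos (2*e2) + Q * sin (2*e2) - cos (2*(e2 - e1)) + 1 = v"
    and h3: "P * cos (2*e3) + Q * sin (2*e3) - cos (2*(e3 - e1)) + cos (2*(e3 - e2)) = v"
  shows False
proof -
  define c1 where "c1 = cos (2*e1)"
  define s1 where "s1 = sin (2*e1)"
  define c2 where "c2 = cos (2*e2)"
  define s2 where "s2 = sin (2*e2)"
  define c3 where "c3 = cos (2*e3)"
  define s3 where "s3 = sin (2*e3)"
  have n2: "s2 * s2 + c2 * c2 = 1" unfolding s2_def c2_def using sin_cos_squared_add[of "2*e2"] by (simp add: power2_eq_square)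
  define p where "p = c1 - c2"
  define q where "q = s1 - s2"
  have h1': "P * c1 + Q * s1 = v" using h1 unfolding c1_def s1_def .
  have h2': "P * c2 + Q * s2 - (c2 * c1 + s2 * s1) + 1 = v"
    using h2 unfolding cos2_diff c1_def s1_def c2_def s2_def .
  have h3': "P * c3 + Q * s3 - (c3 * c1 + s3 * s1) + (c3 * c2 + s3 * s2) = v"
    using h3 unfolding cos2_diff c1_def s1_def c2_def s2_def c3_def s3_def .
  have g2: "(P - p) * cos (2*e2) + (Q - q) * sin (2*e2) = v"
  proof -
    have "(P - p) * c2 + (Q - q) * s2 = P * c2 + Q * s2 - (c2 * c1 + s2 * s1) + (s2 * s2 + c2 * c2)"
      unfolding p_def q_def by algebra
    then show ?thesis using h2' n2 unfolding c2_def s2_def by simp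
  qed
  have g3: "(P - p) * cos (2*e3) + (Q - q) * sin (2*e3) = v"
  proof -
    have "(P - p) * c3 + (Q - q) * s3 = P * c3 + Q * s3 - (c3 * c1 + s3 * s1) + (c3 * c2 + s3 * s2)"
      unfolding p_def q_def by algebra
    then show ?thesis using h3' unfolding c3_def s3_def by simp
  qed
  have gN: "P * cos (2*(eN - pi/2)) + Q * sin (2*(eN - pi/2)) = v"
  proof -
    have "2*(eN - pi/2) = 2*eN - pi" by simp
    then have "cos (2*(eN - pi/2)) = - cos (2*eN)" "sin (2*(eN - pi/2)) = - sin (2*eN)"
      by (simp_all add: cos_diff sin_diff)
    then show ?thesis using hN by simp
  qed
  have lN: "0 < eN - e1" "eN - e1 \<le> pi/4" using o12 o23 o3N r1 rN by auto
  have lo: "0 < e1 - (eN - pi/2)" "e1 - (eN - pi/2) < pi" using lN pi_gt_zero by linarith+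
  obtain Vo where Vo: "Vo^2 = P^2 + Q^2" "v = Vo * cos (e1 - (eN - pi/2))"
    using gap_lemma[OF gN h1 lo] by blast
  have li: "0 < e3 - e2" "e3 - e2 < pi" using o12 o23 o3N lN pi_gt_zero by linarith+
  obtain Vi where Vi: "Vi^2 = (P - p)^2 + (Q - q)^2" "v = Vi * cos (e3 - e2)"
    using gap_lemma[OF g2 g3 li] by blast
  have amp: "P^2 + Q^2 = (P - p)^2 + (Q - q)^2"
  proof -
    have e: "(P - p)^2 + (Q - q)^2 = P^2 + Q^2 - 2 * (P * c1 + Q * s1) + 2 * (P * c2 + Q * s2)
        + (c1 - c2)^2 + (s1 - s2)^2"
      unfolding p_def q_def by algebra
    have n1: "s1 * s1 + c1 * c1 = 1" unfolding s1_def c1_def using sin_cos_squared_add[of "2*e1"] by (simp add: power2_eq_square)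
    have "(c1 - c2)^2 + (s1 - s2)^2 = (s1 * s1 + c1 * c1) + (s2 * s2 + c2 * c2) - 2 * (c2 * c1 + s2 * s1)"
      by algebra
    then have f: "(c1 - c2)^2 + (s1 - s2)^2 = 2 - 2 * (c2 * c1 + s2 * s1)" using n1 n2 by simp
    show ?thesis using e f h1' h2' by simp
  qed
  then have "Vo^2 = Vi^2" using Vo Vi by simp
  then have VV: "Vo = Vi \<or> Vo = - Vi" by (simp add: power2_eq_iff)
  define so where "so = cos (e1 - (eN - pi/2))"
  define si where "si = cos (e3 - e2)"
  have so_le: "so \<le> cos (pi/4)" unfolding so_def
    by (rule cos_monotone_0_pi_le) (use lN in auto)
  have si_gt: "cos (pi/4) < si" unfolding si_def
    by (rule cos_monotone_0_pi) (use o12 o23 o3N lN in auto)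
  have so_pos: "so > 0" unfolding so_def
    by (rule cos_gt_zero_pi) (use lN in auto)
  have vo: "v = Vo * so" using Vo(2) unfolding so_def .
  have vi: "v = Vi * si" using Vi(2) unfolding si_def .
  have "Vo = Vi"
  proof (rule ccontr)
    assume "Vo \<noteq> Vi"
    with VV have "Vo = - Vi" by simp
    then have "Vi * (so + si) = 0" using vo vi by (simp add: algebra_simps)
    moreover have "so + si > 0" using so_pos si_gt so_le by linarith
    ultimately have "Vi = 0" by simp
    then show False using vi v by simp
  qed
  then have "Vi * so = Vi * si" using vo vi by metis
  moreover have "Vi \<noteq> 0" using vi v by auto
  ultimately have "so = si" by simp
  then show False using so_le si_gt by simp
qed




lemma exists_not_in:
  fixes X :: "real set"
  assumes "finite X" "\<alpha> < \<beta>"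
  shows "\<exists>\<theta>. \<alpha> < \<theta> \<and> \<theta> < \<beta> \<and> \<theta> \<notin> X"
proof -
  have "infinite {\<alpha><..<\<beta>}" using assms(2) by (rule infinite_Ioo)
  then have "\<not> {\<alpha><..<\<beta>} \<subseteq> X" using assms(1) finite_subset by blast
  then show ?thesis by auto
qed

lemma per_ind_AE:
  assumes fin: "finite ((A - B) \<union> (B - A))"
  shows "AE \<theta> in lborel. per_ind A \<theta> = per_ind B \<theta>"
proof -
  define D where "D = (A - B) \<union> (B - A)"
  define N where "N = (\<Union>k::int. (\<lambda>x. x + of_int k * (pi/2)) ` D)"
  have "countable N" unfolding N_def using fin unfolding D_def
    by (intro countable_UN) (auto intro: countable_finite)
  then have "AE \<theta> in lborel. \<theta> \<notin> N" by (intro AE_not_in countable_imp_null_set_lborel)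
  then show ?thesis
  proof (rule eventually_mono)
    fix \<theta> assume th: "\<theta> \<notin> N"
    have "\<theta> - of_int k * (pi/2) \<in> A \<longleftrightarrow> \<theta> - of_int k * (pi/2) \<in> B" for k :: int
    proof (rule ccontr)
      assume "\<not> ?thesis"
      then have "\<theta> - of_int k * (pi/2) \<in> D" unfolding D_def by auto
      then have "(\<theta> - of_int k * (pi/2)) + of_int k * (pi/2) \<in> N" unfolding N_def by blast
      then show False using th by simp
    qed
    then show "per_ind A \<theta> = per_ind B \<theta>" unfolding per_ind_def by simp
  qed
qed

lemma sum_Sf_neg:
  fixes m :: "real \<Rightarrow> real"
  assumes "\<And>e. e \<in> A \<Longrightarrow> \<theta> \<le> e \<and> e - \<theta> \<le> pi/2"
  shows "(\<Sum>e\<in>A. m e * Sf (\<theta> - e)) = (\<Sum>e\<in>A. m e * cos (2*(\<theta> - e))) / 2 - (\<Sum>e\<in>A. m e) / 2"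
proof -
  have "(\<Sum>e\<in>A. m e * Sf (\<theta> - e)) = (\<Sum>e\<in>A. m e * cos (2*(\<theta> - e)) / 2 - m e / 2)"
  proof (rule sum.cong[OF refl])
    fix e assume eA: "e \<in> A"
    from assms[OF eA] have "\<theta> \<le> e" "e - \<theta> \<le> pi/2" by auto
    then have "\<theta> - e \<le> 0" "-(pi/2) \<le> \<theta> - e" by linarith+
    then show "m e * Sf (\<theta> - e) = m e * cos (2*(\<theta> - e)) / 2 - m e / 2"
      by (simp add: Sf_nonpos_eq algebra_simps diff_divide_distrib)
  qed
  then show ?thesis by (simp add: sum_subtractf sum_divide_distrib)
qed

lemma sum_Sf_pos:
  fixes m :: "real \<Rightarrow> real"
  assumes "\<And>e. e \<in> A \<Longrightarrow> e \<le> \<theta> \<and> \<theta> - e \<le> pi/2"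
  shows "(\<Sum>e\<in>A. m e * Sf (\<theta> - e)) = (\<Sum>e\<in>A. m e) / 2 - (\<Sum>e\<in>A. m e * cos (2*(\<theta> - e))) / 2"
proof -
  have "(\<Sum>e\<in>A. m e * Sf (\<theta> - e)) = (\<Sum>e\<in>A. m e / 2 - m e * cos (2*(\<theta> - e)) / 2)"
  proof (rule sum.cong[OF refl])
    fix e assume eA: "e \<in> A"
    from assms[OF eA] have "e \<le> \<theta>" "\<theta> - e \<le> pi/2" by auto
    then have "0 \<le> \<theta> - e" "\<theta> - e \<le> pi/2" by linarith+
    then show "m e * Sf (\<theta> - e) = m e / 2 - m e * cos (2*(\<theta> - e)) / 2"
      by (simp add: Sf_nonneg_eq algebra_simps diff_divide_distrib)
  qed
  then show ?thesis by (simp add: sum_subtractf sum_divide_distrib)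
qed

lemma sum_cos_expand:
  fixes m :: "real \<Rightarrow> real"
  shows "(\<Sum>e\<in>A. m e * cos (2*(\<theta> - e))) =
     cos (2*\<theta>) * (\<Sum>e\<in>A. m e * cos (2*e)) + sin (2*\<theta>) * (\<Sum>e\<in>A. m e * sin (2*e))"
  unfolding cos2_diff sum_distrib_left sum.distrib[symmetric]
  by (rule sum.cong) (auto simp: algebra_simps)

context ivs begin

definition EP where "EP = {e \<in> EE. mu e \<noteq> 0}"

lemma finEP: "finite EP" unfolding EP_def using finEE by auto
lemma EP_sub: "EP \<subseteq> {-pi/8..pi/8}" unfolding EP_def using EE_sub by auto

lemma sum_EE_EP: "(\<Sum>e\<in>EE. mu e * f e) = (\<Sum>e\<in>EP. mu e * (f e :: real))"
  by (rule sum.mono_neutral_right[OF finEE]) (auto simp: EP_def)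

lemma main_ivs:
  assumes rot: "rotating (per_ind I)"
  shows "\<exists>b a. -pi/8 \<le> b \<and> b \<le> a \<and> a \<le> pi/8 \<and> (AE \<theta> in lborel. per_ind I \<theta> = per_ind {b..a} \<theta>)"
proof -
  obtain c where c0: "c \<noteq> 0" and cv: "\<And>e. e \<in> EE \<Longrightarrow> mu e \<noteq> 0 \<Longrightarrow> 2 * H0 e = c"
    using endpoint_vals[OF rot] by blast
  define v where "v = 4 * c / pi"
  have v0: "v \<noteq> 0" unfolding v_def using c0 by simp
  have Hs: "Hsum \<theta> = (\<Sum>e\<in>EP. mu e * Sf (\<theta> - e))" for \<theta>
    unfolding Hsum_EE sum_EE_EP ..
  have ind: "(if \<theta> \<in> I then 1 else 0) = (\<Sum>e\<in>EP. mu e * (if e < \<theta> then 1 else 0))" if "\<theta> \<notin> XX" for \<theta>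
    using ind_EE[OF that] unfolding sum_EE_EP .
  have vals: "Hsum e = v" if "e \<in> EP" for e
  proof -
    have "-pi/8 \<le> e" "e \<le> pi/8" using that EP_sub by auto
    then have "e < 3*pi/8" "-(3*pi/8) < e" using pi_gt_zero by linarith+
    then have "\<bar>e\<bar> < 3*pi/8" using abs_less_iff[of e "3*pi/8"] by linarith
    then have "H0 e = pi/8 * Hsum e" by (rule H0_formula)
    moreover have "2 * H0 e = c" using cv that unfolding EP_def by auto
    ultimately show ?thesis unfolding v_def by (simp add: field_simps)
  qed
  have pi8: "pi/8 < 1" using pi_less_4 by simp
  have smu: "(\<Sum>e\<in>EP. mu e) = 0"
  proof -
    have "1 \<notin> XX" using XX_sub pi8 by auto
    moreover have "(1::real) \<notin> I" using Isub pi8 by auto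
    ultimately have "0 = (\<Sum>e\<in>EP. mu e * (if e < 1 then 1 else 0))" using ind[of 1] by simp
    also have "\<dots> = (\<Sum>e\<in>EP. mu e)" using EP_sub pi8 by (intro sum.cong) auto
    finally show ?thesis by simp
  qed
  show ?thesis
  proof (cases "EP = {}")
    case True
    have "I \<subseteq> XX"
    proof
      fix \<theta> assume "\<theta> \<in> I"
      show "\<theta> \<in> XX"
      proof (rule ccontr)
        assume "\<theta> \<notin> XX"
        from ind[OF this] True \<open>\<theta> \<in> I\<close> show False by simp
      qed
    qed
    then have "finite ((I - {0..0}) \<union> ({0..0} - I))" using finXX finite_subset by auto
    then have "AE \<theta> in lborel. per_ind I \<theta> = per_ind {0..0} \<theta>" by (rule per_ind_AE)
    then show ?thesis using pi_gt_zero by (intro exI[of _ 0]) auto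
  next
    case False
    define e1 where "e1 = Min EP"
    have e1: "e1 \<in> EP" "\<And>e. e \<in> EP \<Longrightarrow> e1 \<le> e" unfolding e1_def using finEP False by auto
    have "EP \<noteq> {e1}"
    proof
      assume "EP = {e1}"
      then have "mu e1 = 0" using smu by simp
      then show False using e1 unfolding EP_def by auto
    qed
    then have ne2: "EP - {e1} \<noteq> {}" using e1 by auto
    define e2 where "e2 = Min (EP - {e1})"
    have e2in: "e2 \<in> EP - {e1}" unfolding e2_def using finEP ne2 by (intro Min_in) auto
    have e2le: "\<And>e. e \<in> EP - {e1} \<Longrightarrow> e2 \<le> e" unfolding e2_def using finEP by (intro Min_le) auto
    have e2: "e2 \<in> EP" "e2 \<noteq> e1" "\<And>e. e \<in> EP - {e1} \<Longrightarrow> e2 \<le> e" using e2in e2le by auto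
    have o12: "e1 < e2" using e1 e2 by force
    define R where "R = EP - {e1, e2}"
    have finR: "finite R" unfolding R_def using finEP by auto
    have R2: "e2 < e" if "e \<in> R" for e using that e2(3)[of e] unfolding R_def by force
    have EPd: "EP = insert e1 (insert e2 R)" unfolding R_def using e1 e2 by auto
    have dec: "(\<Sum>e\<in>EP. f e) = f e1 + f e2 + (\<Sum>e\<in>R. f e)" for f :: "real \<Rightarrow> real"
    proof -
      have "e1 \<notin> insert e2 R" "e2 \<notin> R" unfolding R_def using o12 by auto
      then show ?thesis unfolding EPd using finR by (simp add: add.assoc)
    qed
    have mue: "mu e \<noteq> 0" if "e \<in> EP" for e using that unfolding EP_def by auto
    obtain \<theta>a where \<theta>a: "e1 < \<theta>a" "\<theta>a < e2" "\<theta>a \<notin> XX" using exists_not_in[OF finXX o12] by blast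
    have "(if \<theta>a \<in> I then 1 else 0) = mu e1"
    proof -
      have "(\<Sum>e\<in>R. mu e * (if e < \<theta>a then 1 else 0)) = 0"
        using R2 \<theta>a by (intro sum.neutral) force
      then show ?thesis using ind[OF \<theta>a(3)] dec \<theta>a by simp
    qed
    then have mu1: "mu e1 = 1" using mue[OF e1(1)] by (auto split: if_splits)
    define e3' where "e3' = (if R = {} then e2 + 1 else Min R)"
    have o23': "e2 < e3'" unfolding e3'_def using R2 finR by auto
    have R3': "e3' \<le> e" if "e \<in> R" for e unfolding e3'_def using that finR by auto
    obtain \<theta>b where \<theta>b: "e2 < \<theta>b" "\<theta>b < e3'" "\<theta>b \<notin> XX" using exists_not_in[OF finXX o23'] by blast
    have "(if \<theta>b \<in> I then 1 else 0) = mu e1 + mu e2"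
    proof -
      have "(\<Sum>e\<in>R. mu e * (if e < \<theta>b then 1 else 0)) = 0"
        using R3' \<theta>b by (intro sum.neutral) force
      then show ?thesis using ind[OF \<theta>b(3)] dec \<theta>b o12 by simp
    qed
    then have mu2: "mu e2 = -1" using mue[OF e2(1)] mu1 by (auto split: if_splits)
    have smuR: "(\<Sum>e\<in>R. mu e) = 0" using smu dec[of mu] mu1 mu2 by simp
    have rng: "-pi/8 \<le> e" "e \<le> pi/8" if "e \<in> EP" for e using that EP_sub by auto
    show ?thesis
    proof (cases "R = {}")
      case True
      have "(I - {e1..e2}) \<union> ({e1..e2} - I) \<subseteq> XX \<union> {e1, e2}"
      proof
        fix \<theta> assume th: "\<theta> \<in> (I - {e1..e2}) \<union> ({e1..e2} - I)"
        show "\<theta> \<in> XX \<union> {e1, e2}"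
        proof (rule ccontr)
          assume nin: "\<theta> \<notin> XX \<union> {e1, e2}"
          have "(if \<theta> \<in> I then 1 else 0) = (if e1 < \<theta> then 1 else 0) - (if e2 < \<theta> then (1::real) else 0)"
            using ind[of \<theta>] nin dec[of "\<lambda>e. mu e * (if e < \<theta> then 1 else 0)"] True mu1 mu2 by simp
          then show False using th nin o12 by (auto split: if_splits)
        qed
      qed
      moreover have "finite (XX \<union> {e1, e2})" using finXX by simp
      ultimately have "finite ((I - {e1..e2}) \<union> ({e1..e2} - I))" by (rule finite_subset)
      then have "AE \<theta> in lborel. per_ind I \<theta> = per_ind {e1..e2} \<theta>" by (rule per_ind_AE)
      then show ?thesis using rng[OF e1(1)] rng[OF e2(1)] o12 by (intro exI[of _ e1] exI[of _ e2]) auto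
    next
      case False
      define e3 where "e3 = Min R"
      have e3: "e3 \<in> R" "\<And>e. e \<in> R \<Longrightarrow> e3 \<le> e" unfolding e3_def using finR False by auto
      define eN where "eN = Max EP"
      have eN: "eN \<in> EP" "\<And>e. e \<in> EP \<Longrightarrow> e \<le> eN" unfolding eN_def using finEP \<open>EP \<noteq> {}\<close> by auto
      have e3EP: "e3 \<in> EP" using e3(1) unfolding R_def by auto
      define P where "P = (\<Sum>e\<in>EP. mu e * cos (2*e)) / 2"
      define Q where "Q = (\<Sum>e\<in>EP. mu e * sin (2*e)) / 2"
      have ce: "(\<Sum>e\<in>EP. mu e * cos (2*(\<theta> - e))) = 2 * (P * cos (2*\<theta>) + Q * sin (2*\<theta>))" for \<theta>
        unfolding sum_cos_expand P_def Q_def by (simp add: algebra_simps)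
      have h1: "P * cos (2*e1) + Q * sin (2*e1) = v"
      proof -
        have "Hsum e1 = (\<Sum>e\<in>EP. mu e * cos (2*(e1 - e))) / 2 - (\<Sum>e\<in>EP. mu e) / 2"
          unfolding Hs
        proof (rule sum_Sf_neg)
          fix e assume "e \<in> EP"
          then show "e1 \<le> e \<and> e - e1 \<le> pi/2" using e1(2) rng rng[OF e1(1)] pi_gt_zero by force
        qed
        then show ?thesis using vals[OF e1(1)] ce smu by simp
      qed
      have hN: "- (P * cos (2*eN) + Q * sin (2*eN)) = v"
      proof -
        have "Hsum eN = (\<Sum>e\<in>EP. mu e) / 2 - (\<Sum>e\<in>EP. mu e * cos (2*(eN - e))) / 2"
          unfolding Hs
        proof (rule sum_Sf_pos)
          fix e assume "e \<in> EP"
          then show "e \<le> eN \<and> eN - e \<le> pi/2" using eN(2) rng rng[OF eN(1)] pi_gt_zero by force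
        qed
        then have X: "v = sum mu EP / 2 - (\<Sum>e\<in>EP. mu e * cos (2*(eN - e))) / 2" using vals[OF eN(1)] by simp
        have "v = 0 / 2 - (2 * (P * cos (2*eN) + Q * sin (2*eN))) / 2" using X unfolding ce[of eN] smu .
        then show ?thesis by (simp add: field_simps)
      qed
      have mid: "Hsum \<theta> = P * cos (2*\<theta>) + Q * sin (2*\<theta>) - cos (2*(\<theta> - e1)) + cos (2*(\<theta> - e2))"
        if th: "e2 \<le> \<theta>" "\<theta> \<le> e3" "\<theta> \<in> EP" for \<theta>
      proof -
        have s1: "Sf (\<theta> - e1) = (1 - cos (2*(\<theta> - e1))) / 2"
          using o12 th rng[OF e1(1)] rng[OF th(3)] pi_gt_zero by (intro Sf_nonneg_eq) auto
        have s2: "Sf (\<theta> - e2) = (1 - cos (2*(\<theta> - e2))) / 2"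
          using th rng[OF e2(1)] rng[OF th(3)] pi_gt_zero by (intro Sf_nonneg_eq) auto
        have sR: "(\<Sum>e\<in>R. mu e * Sf (\<theta> - e)) = (\<Sum>e\<in>R. mu e * cos (2*(\<theta> - e))) / 2 - (\<Sum>e\<in>R. mu e) / 2"
        proof (rule sum_Sf_neg)
          fix e assume eR: "e \<in> R"
          then have "e \<in> EP" unfolding R_def by auto
          then show "\<theta> \<le> e \<and> e - \<theta> \<le> pi/2" using e3(2)[OF eR] th rng rng[OF th(3)] pi_gt_zero by force
        qed
        have cR: "(\<Sum>e\<in>R. mu e * cos (2*(\<theta> - e))) = 2 * (P * cos (2*\<theta>) + Q * sin (2*\<theta>))
             - cos (2*(\<theta> - e1)) + cos (2*(\<theta> - e2))"
          using ce[of \<theta>] dec[of "\<lambda>e. mu e * cos (2*(\<theta> - e))"] mu1 mu2 by simp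
        have "Hsum \<theta> = mu e1 * Sf (\<theta> - e1) + mu e2 * Sf (\<theta> - e2) + (\<Sum>e\<in>R. mu e * Sf (\<theta> - e))"
          unfolding Hs by (rule dec)
        also have "\<dots> = P * cos (2*\<theta>) + Q * sin (2*\<theta>) - cos (2*(\<theta> - e1)) + cos (2*(\<theta> - e2))"
          unfolding sR cR smuR s1 s2 mu1 mu2 by (simp add: field_simps)
        finally show ?thesis .
      qed
      have h2: "P * cos (2*e2) + Q * sin (2*e2) - cos (2*(e2 - e1)) + 1 = v"
        using mid[of e2] vals[OF e2(1)] e2(1) R2[OF e3(1)] by simp
      have h3: "P * cos (2*e3) + Q * sin (2*e3) - cos (2*(e3 - e1)) + cos (2*(e3 - e2)) = v"
        using mid[of e3] vals[OF e3EP] e3EP R2[OF e3(1)] by simp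
      have "False"
        by (rule core_contra[OF o12 R2[OF e3(1)] eN(2)[OF e3EP] rng(1)[OF e1(1)] rng(2)[OF eN(1)] v0 h1 hN h2 h3])
      then show ?thesis ..
    qed
  qed
qed

end


theorem mainTheorem1:
  fixes I :: "real set" and F :: "real set set"
  assumes "finite F"
    and "\<forall>J\<in>F. is_interval J"
    and "pairwise disjnt F"
    and "I = \<Union>F"
    and "I \<subseteq> {-pi/8..pi/8}"
    and "rotating (per_ind I)"
  shows "\<exists>b a. -pi/8 \<le> b \<and> b \<le> a \<and> a \<le> pi/8 \<and>
           (AE \<theta> in lborel. per_ind I \<theta> = per_ind {b..a} \<theta>)"
proof -
  interpret ivs I F using assms(1-5) by unfold_locales auto
  show ?thesis by (rule main_ivs[OF assms(6)])
qed

end
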